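(* Let $\varphi(s,v)=\vec c(s)+v\vec q(s)$ be a developable timelike ruled surface of type $M^1_-$ in $\mathbb{R}^3_1$, and let $\varphi^*(s,v)=\vec c(s)+R\vec a(s)+v\vec q^*(s)$ be a timelike ruled surface that is a Mannheim offset of $\varphi$, with $\theta$ the angle between $\vec q$ and $\vec q^*$. (i) If $\varphi^*$ is of type $M^1_+$, then $\varphi^*$ is developable if and only if $\cosh\theta+R\kappa\frac{ds_1}{ds}\sinh\theta=0$. (ii) If $\varphi^*$ is of type $M^1_-$, then $\varphi^*$ is developable if and only if $\sinh\theta+R\kappa\frac{ds_1}{ds}\cosh\theta=0$.
   Context: Work in Minkowski 3-space $\mathbb{R}^3_1$, i.e. $\mathbb{R}^3$ with $\langle x,y\rangle=-x_1y_1+x_2y_2+x_3y_3$, norm $\|x\|=\sqrt{|\langle x,x\rangle|}$, and Lorentzian cross product $x\times y=(x_2y_3-x_3y_2,\,x_1y_3-x_3y_1,\,x_2y_1-x_1y_2)$. A ruled surface is $\varphi(s,v)=\vec c(s)+v\vec q(s)$, where $\vec q$ is a unit non-null vector field with $\langle\vec q,\vec q\rangle=\varepsilon_2\in\{\pm1\}$, $d\vec q/ds$ is non-null, and the base curve $\vec c$ is the striction curve, i.e. $\langle d\vec q/ds,d\vec c/ds\rangle=0$; $s$ is the arc-length parameter of $\vec c$. Its Frenet frame is $\{\vec q,\vec h,\vec a\}$ with central normal $\vec h=\frac{d\vec q/ds}{\|d\vec q/ds\|}$ and asymptotic normal $\vec a=\frac{(d\vec q/ds)\times\vec q}{\|d\vec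 q/ds\|}$. The surface is of type $M^1_-$ if $\vec q$ is timelike and $\vec h$ spacelike; of type $M^1_+$ if $\vec q$ and $\vec h$ are both spacelike (both types are timelike surfaces). Let $s_1$ be the arc-length parameter of the spherical image curve traced by $\vec q$ on the unit hyperbolic/Lorentzian sphere, and $\kappa$ the conical curvature of the directing cone; for types $M^1_\pm$ the Frenet formulas are $d\vec q/ds_1=\vec h$, $d\vec h/ds_1=-\varepsilon_2\vec q+\kappa\vec a$, $d\vec a/ds_1=\varepsilon_2\kappa\vec h$. The distribution parameter is $d_\varphi=\det(d\vec c/ds,\vec q,d\vec q/ds)/\langle d\vec q/ds,d\vec q/ds\rangle$, and a ruled surface is developable iff its distribution parameter vanishes identically. A ruled surface $\varphi^*(s,v)=\vec c^*(s)+v\vec q^*(s)$ with striction curve $\vec c^*$ and Frenet frame $\{\vec q^*,\vec h^*,\vec a^*\}$ is a Mannheim offset of the timelike ruled surface $\varphi$ if there is a one-to-one correspondence between rulings with $\vec h^*=\vec a$; then $\vec c^*=\vec c+R\vec a$, and since $\varphi$ is developable $R$ is constant. With $\theta$ the angle between $\vec q$ and $\vec q^*$: if $\varphi$ is of type $M^1_-$ and $\varphi^*$ of type $M^1_+$, then $\vec q^*=\sinh\theta\,\vec q+\cosh\theta\,\vec h$, $\vec a^*=\cosh\theta\,\vec q+\sinh\theta\,\vec h$; if both are of type $M^1_-$, then $\vec q^*=\cosh\theta\,\vec q+\sinh\theta\,\vec h$, $\vec a^*=\sinh\theta\,\vec q+\cosh\theta\,\vec h$. *)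

theory Defs
  imports "HOL-Analysis.Analysis"
begin

definition lor :: "real^3 \<Rightarrow> real^3 \<Rightarrow> real" where
  "lor x y = - (x$1 * y$1) + x$2 * y$2 + x$3 * y$3"

definition lnorm :: "real^3 \<Rightarrow> real" where
  "lnorm x = sqrt \<bar>lor x x\<bar>"

definition lcross :: "real^3 \<Rightarrow> real^3 \<Rightarrow> real^3" where
  "lcross x y = vector [x$2 * y$3 - x$3 * y$2, x$1 * y$3 - x$3 * y$1, x$2 * y$1 - x$1 * y$2]"

definition det3 :: "real^3 \<Rightarrow> real^3 \<Rightarrow> real^3 \<Rightarrow> real" where
  "det3 x y z = x$1 * (y$2 * z$3 - y$3 * z$2) - x$2 * (y$1 * z$3 - y$3 * z$1)
               + x$3 * (y$1 * z$2 - y$2 * z$1)"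

definition spacelike :: "real^3 \<Rightarrow> bool" where
  "spacelike x \<longleftrightarrow> lor x x > 0"

definition timelike :: "real^3 \<Rightarrow> bool" where
  "timelike x \<longleftrightarrow> lor x x < 0"

definition nonnull :: "real^3 \<Rightarrow> bool" where
  "nonnull x \<longleftrightarrow> lor x x \<noteq> 0"

text \<open>Central normal h = (dq/ds)/||dq/ds|| and asymptotic normal
  a = ((dq/ds) x q)/||dq/ds||, as functions of the values q(s), dq/ds(s).\<close>
definition cnormal :: "real^3 \<Rightarrow> real^3" where
  "cnormal dq = (1 / lnorm dq) *\<^sub>R dq"

definition anormal :: "real^3 \<Rightarrow> real^3 \<Rightarrow> real^3" where
  "anormal q dq = (1 / lnorm dq) *\<^sub>R lcross dq q"

definition dist_param :: "real^3 \<Rightarrow> real^3 \<Rightarrow> real^3 \<Rightarrow> real" where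
  "dist_param dc q dq = det3 dc q dq / lor dq dq"

end

theory Submission
  imports Defs
begin

lemma v3: "(v::real^3) = w \<longleftrightarrow> v$1 = w$1 \<and> v$2 = w$2 \<and> v$3 = w$3"
  by (simp add: vec_eq_iff forall_3)

lemma comp_deriv: "(f has_vector_derivative D) (at s) \<Longrightarrow>
  ((\<lambda>t. (f t :: real^3) $ i) has_real_derivative D $ i) (at s)"
  using bounded_linear.has_vector_derivative[OF bounded_linear_vec_nth, of f D "at s" i]
  by (simp add: has_real_derivative_iff_has_vector_derivative)

lemma prodD: "(f has_real_derivative a) (at s) \<Longrightarrow> (g has_real_derivative b) (at s) \<Longrightarrow>
  ((\<lambda>t. f t * g t) has_real_derivative a * g s + f s * b) (at s)"
  by (drule (1) DERIV_mult) (simp add: algebra_simps)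

lemma vector3_axis: "(vector [a,b,c] :: real^3) = a *\<^sub>R axis 1 1 + b *\<^sub>R axis 2 1 + c *\<^sub>R axis 3 1"
  by (simp add: v3 axis_def)

lemma vec3_deriv:
  assumes "(f1 has_real_derivative d1) (at s)" "(f2 has_real_derivative d2) (at s)"
          "(f3 has_real_derivative d3) (at s)"
  shows "((\<lambda>t. vector [f1 t, f2 t, f3 t] :: real^3) has_vector_derivative vector [d1,d2,d3]) (at s)"
proof -
  have L: "((\<lambda>t. f t *\<^sub>R v) has_vector_derivative d *\<^sub>R v) (at s)"
    if "(f has_real_derivative d) (at s)" for f d and v :: "real^3"
    using bounded_linear.has_vector_derivative[OF bounded_linear_scaleR_left, of f d "at s" v] that
    by (simp add: has_real_derivative_iff_has_vector_derivative)
  show ?thesis unfolding vector3_axis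
    by (intro has_vector_derivative_add L assms)
qed

lemma lcross_deriv:
  assumes "(x has_vector_derivative dx) (at s)" "(y has_vector_derivative dy) (at s)"
  shows "((\<lambda>t. lcross (x t) (y t)) has_vector_derivative (lcross dx (y s) + lcross (x s) dy)) (at s)"
proof -
  note cx = comp_deriv[OF assms(1)] and cy = comp_deriv[OF assms(2)]
  have "((\<lambda>t. lcross (x t) (y t)) has_vector_derivative
     vector [dx$2 * y s$3 + x s$2 * dy$3 - (dx$3 * y s$2 + x s$3 * dy$2),
             dx$1 * y s$3 + x s$1 * dy$3 - (dx$3 * y s$1 + x s$3 * dy$1),
             dx$2 * y s$1 + x s$2 * dy$1 - (dx$1 * y s$2 + x s$1 * dy$2)]) (at s)"
    unfolding lcross_def
    by (intro vec3_deriv DERIV_diff prodD cx cy)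
  moreover have "vector [dx$2 * y s$3 + x s$2 * dy$3 - (dx$3 * y s$2 + x s$3 * dy$2),
             dx$1 * y s$3 + x s$1 * dy$3 - (dx$3 * y s$1 + x s$3 * dy$1),
             dx$2 * y s$1 + x s$2 * dy$1 - (dx$1 * y s$2 + x s$1 * dy$2)]
      = lcross dx (y s) + lcross (x s) dy"
    by (simp add: v3 lcross_def algebra_simps)
  ultimately show ?thesis by simp
qed

lemma lor_deriv:
  assumes "(x has_vector_derivative dx) (at s)"
  shows "((\<lambda>t. lor (x t) (x t)) has_real_derivative 2 * lor (x s) dx) (at s)"
proof -
  note cx = comp_deriv[OF assms(1)]
  have "((\<lambda>t. lor (x t) (x t)) has_real_derivative
     - (dx$1 * x s$1 + x s$1 * dx$1) + (dx$2 * x s$2 + x s$2 * dx$2) + (dx$3 * x s$3 + x s$3 * dx$3)) (at s)"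
    unfolding lor_def by (intro DERIV_add DERIV_minus prodD cx)
  then show ?thesis by (simp add: lor_def algebra_simps)
qed

lemma dcross: "lcross (lcross x y) z = lor y z *\<^sub>R x - lor x z *\<^sub>R y"
  by (simp add: v3 lcross_def lor_def algebra_simps)
lemma lag: "lor (lcross x y) (lcross x y) = lor x y ^2 - lor x x * lor y y"
  by (simp add: lcross_def lor_def algebra_simps power2_eq_square)
lemma tp: "lor (lcross x y) z = - det3 x y z"
  by (simp add: lcross_def lor_def det3_def algebra_simps)
lemma dec: assumes "lor q q = -1" "lor h h = 1" "lor q h = 0"
  shows "c = (- lor c q) *\<^sub>R q + lor c h *\<^sub>R h + lor c (lcross h q) *\<^sub>R lcross h q"
  using assms unfolding v3 by (simp add: lcross_def lor_def; algebra)
lemma lcross_self: "lcross x (k *\<^sub>R x) = 0" "lcross x x = 0"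
  by (simp_all add: v3 lcross_def algebra_simps)
lemma lcross_scale: "lcross (k *\<^sub>R x) y = k *\<^sub>R lcross x y" "lcross (x + y) z = lcross x z + lcross y z"
  by (simp_all add: v3 lcross_def algebra_simps)
lemma lor_sym: "lor x y = lor y x" by (simp add: lor_def algebra_simps)
lemma lor_lin: "lor (k *\<^sub>R x) y = k * lor x y" "lor (x + y) z = lor x z + lor y z"
  "lor (x - y) z = lor x z - lor y z"
  by (simp_all add: lor_def algebra_simps)
lemma det3_lin: "det3 (y - k *\<^sub>R z) (a *\<^sub>R y + b *\<^sub>R z) (m *\<^sub>R w)
   = m * (b + k * a) * det3 y z w"
  by (simp add: det3_def algebra_simps)
lemma det3_lin2: "det3 (k *\<^sub>R x) y z = k * det3 x y z" "det3 x y (k *\<^sub>R z) = k * det3 x y z"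
  by (simp_all add: det3_def algebra_simps)
lemma anormal_eq: "anormal q dq = lcross (cnormal dq) q"
  by (simp add: anormal_def cnormal_def lcross_scale)

lemma lor_r: "lor x (k *\<^sub>R y) = k * lor x y" by (simp add: lor_def algebra_simps)
lemma lor_neg: "lor (- x) y = - lor x y" "lor x (- y) = - lor x y" by (simp_all add: lor_def)

lemma det3_cyc: "det3 x y z = det3 z x y" "det3 x y z = - det3 x z y"
  by (simp_all add: det3_def algebra_simps)

theorem theorem5p1:
  fixes I :: "real set"
    and c q dc dq qs dqs :: "real \<Rightarrow> real^3"
    and s1 \<kappa> \<theta> :: "real \<Rightarrow> real"
    and R :: real
  assumes I_open: "open I"
    \<comment> \<open>the base ruled surface phi(s,v) = c(s) + v q(s)\<close>
    and c_deriv: "\<And>s. s \<in> I \<Longrightarrow> (c has_vector_derivative dc s) (at s)"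
    and q_deriv: "\<And>s. s \<in> I \<Longrightarrow> (q has_vector_derivative dq s) (at s)"
    and q_unit_timelike: "\<And>s. s \<in> I \<Longrightarrow> lor (q s) (q s) = -1"
    and h_spacelike: "\<And>s. s \<in> I \<Longrightarrow> spacelike (dq s)"
    and striction: "\<And>s. s \<in> I \<Longrightarrow> lor (dq s) (dc s) = 0"
    and arclength: "\<And>s. s \<in> I \<Longrightarrow> lnorm (dc s) = 1"
    and orient: "\<And>s. s \<in> I \<Longrightarrow> lor (dc s) (q s) < 0"
    \<comment> \<open>s1: arc length of the spherical image of q\<close>
    and s1_deriv: "\<And>s. s \<in> I \<Longrightarrow> (s1 has_real_derivative lnorm (dq s)) (at s)"
    \<comment> \<open>Frenet formula dh/ds1 = q + kappa a (type M^1_-, eps2 = -1), defining kappa\<close>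
    and frenet: "\<And>s. s \<in> I \<Longrightarrow>
       ((\<lambda>t. cnormal (dq t)) has_vector_derivative
          (deriv s1 s *\<^sub>R (q s + \<kappa> s *\<^sub>R anormal (q s) (dq s)))) (at s)"
    \<comment> \<open>phi is developable\<close>
    and developable: "\<And>s. s \<in> I \<Longrightarrow> dist_param (dc s) (q s) (dq s) = 0"
    \<comment> \<open>the Mannheim offset phi*(s,v) = c(s) + R a(s) + v q*(s)\<close>
    and qs_deriv: "\<And>s. s \<in> I \<Longrightarrow> (qs has_vector_derivative dqs s) (at s)"
    and dqs_nonnull: "\<And>s. s \<in> I \<Longrightarrow> nonnull (dqs s)"
    and mannheim: "\<And>s. s \<in> I \<Longrightarrow> cnormal (dqs s) = anormal (q s) (dq s)"
    and striction_star: "\<And>s. s \<in> I \<Longrightarrow>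
       lor (dqs s) (vector_derivative (\<lambda>t. c t + R *\<^sub>R anormal (q t) (dq t)) (at s)) = 0"
  shows
   "((\<forall>s\<in>I. lor (qs s) (qs s) = 1 \<and> spacelike (dqs s) \<and>
             qs s = sinh (\<theta> s) *\<^sub>R q s + cosh (\<theta> s) *\<^sub>R cnormal (dq s)) \<longrightarrow>
       ((\<forall>s\<in>I. dist_param
                 (vector_derivative (\<lambda>t. c t + R *\<^sub>R anormal (q t) (dq t)) (at s))
                 (qs s) (dqs s) = 0)
        \<longleftrightarrow> (\<forall>s\<in>I. cosh (\<theta> s) + R * \<kappa> s * deriv s1 s * sinh (\<theta> s) = 0)))
    \<and>
    ((\<forall>s\<in>I. lor (qs s) (qs s) = -1 \<and> spacelike (dqs s) \<and>
             qs s = cosh (\<theta> s) *\<^sub>R q s + sinh (\<theta> s) *\<^sub>R cnormal (dq s)) \<longrightarrow>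
       ((\<forall>s\<in>I. dist_param
                 (vector_derivative (\<lambda>t. c t + R *\<^sub>R anormal (q t) (dq t)) (at s))
                 (qs s) (dqs s) = 0)
        \<longleftrightarrow> (\<forall>s\<in>I. sinh (\<theta> s) + R * \<kappa> s * deriv s1 s * cosh (\<theta> s) = 0)))"
  proof -
  have pt: "dist_param (vector_derivative (\<lambda>t. c t + R *\<^sub>R anormal (q t) (dq t)) (at s))
                 (qs s) (dqs s) = 0 \<longleftrightarrow> \<beta> + R * \<kappa> s * deriv s1 s * \<alpha> = 0"
    if sI: "s \<in> I" and sp: "spacelike (dqs s)" and qse: "qs s = \<alpha> *\<^sub>R q s + \<beta> *\<^sub>R cnormal (dq s)"
    for s \<alpha> \<beta>
  proof -
    define Q where "Q = q s"
    define D where "D = dq s"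
    define L where "L = lnorm D"
    define H where "H = cnormal D"
    define A where "A = anormal Q D"
    define C where "C = dc s"
    have Dpos: "lor D D > 0" using h_spacelike[OF sI] by (simp add: D_def spacelike_def)
    have Lpos: "L > 0" using Dpos by (simp add: L_def lnorm_def)
    have LL: "L * L = lor D D" using Dpos by (simp add: L_def lnorm_def)
    have ds1: "deriv s1 s = L" using DERIV_imp_deriv[OF s1_deriv[OF sI]] by (simp add: L_def D_def)
    have F1: "lor Q D = 0"
    proof -
      have d1: "((\<lambda>t. lor (q t) (q t)) has_real_derivative 2 * lor Q D) (at s)"
        using lor_deriv[OF q_deriv[OF sI]] by (simp add: Q_def D_def)
      have "((\<lambda>t. - 1::real) has_real_derivative 0) (at s)" by simp
      then have d0: "((\<lambda>t. lor (q t) (q t)) has_real_derivative 0) (at s)"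
        by (rule has_field_derivative_transform_within_open[OF _ I_open sI])
           (simp add: q_unit_timelike)
      show ?thesis using DERIV_unique[OF d1 d0] by simp
    qed
    have HD: "H = (1/L) *\<^sub>R D" by (simp add: H_def cnormal_def L_def)
    have DH: "D = L *\<^sub>R H" using Lpos by (simp add: HD)
    have QQ: "lor Q Q = -1" using q_unit_timelike[OF sI] by (simp add: Q_def)
    have HH: "lor H H = 1" using LL Lpos Dpos by (simp add: HD lor_lin lor_r field_simps)
    have QH: "lor Q H = 0" using F1 by (simp add: HD lor_r)
    have HQ: "lor H Q = 0" using QH lor_sym[of H Q] by simp
    have AHQ: "A = lcross H Q" by (simp add: A_def H_def anormal_eq)
    have devd: "det3 C Q D = 0"
      using developable[OF sI] Dpos by (simp add: dist_param_def C_def Q_def D_def)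
    have "lor C D = 0" using striction[OF sI] lor_sym[of C D] by (simp add: C_def D_def)
    then have CH: "lor C H = 0" by (simp add: HD lor_r)
    have CA: "lor C A = 0"
    proof -
      have "det3 C Q D = L * det3 C Q H" by (simp add: DH det3_lin2)
      then have "det3 C Q H = 0" using devd Lpos by simp
      moreover have "lor C A = lor A C" by (rule lor_sym)
      ultimately show ?thesis using tp[of H Q C] det3_cyc[of H Q C] det3_cyc[of C Q H]
        by (simp add: AHQ)
    qed
    have Cx: "C = (- lor C Q) *\<^sub>R Q" using dec[OF QQ HH QH, of C] CH CA by (simp add: AHQ)
    have xpos: "- lor C Q > 0" using orient[OF sI] by (simp add: C_def Q_def)
    have "\<bar>lor C C\<bar> = 1" using arclength[OF sI] by (simp add: lnorm_def C_def)
    moreover have "lor C C = - (lor C Q * lor C Q)"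
      by (subst (1 2) Cx) (simp add: lor_lin lor_r lor_neg QQ)
    ultimately have "lor C Q * lor C Q = 1" by simp
    then have "lor C Q = 1 \<or> lor C Q = -1" by (simp add: square_eq_1_iff)
    then have "lor C Q = -1" using xpos by auto
    then have CQ: "C = Q" using Cx by simp
    have ader: "((\<lambda>t. anormal (q t) (dq t)) has_vector_derivative (- (L * \<kappa> s)) *\<^sub>R H) (at s)"
    proof -
      have "((\<lambda>t. lcross (cnormal (dq t)) (q t)) has_vector_derivative
          lcross (deriv s1 s *\<^sub>R (q s + \<kappa> s *\<^sub>R anormal (q s) (dq s))) (q s) + lcross (cnormal (dq s)) (dq s)) (at s)"
        by (rule lcross_deriv[OF frenet[OF sI] q_deriv[OF sI]])
      moreover have "lcross (deriv s1 s *\<^sub>R (q s + \<kappa> s *\<^sub>R anormal (q s) (dq s))) (q s) + lcross (cnormal (dq s)) (dq s)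
          = (- (L * \<kappa> s)) *\<^sub>R H"
      proof -
        have "lcross H D = 0" by (simp add: DH lcross_self)
        moreover have "lcross A Q = - H" by (simp add: AHQ dcross QQ HQ)
        ultimately show ?thesis
          by (simp add: ds1 lcross_scale lcross_self A_def[symmetric] Q_def[symmetric]
              D_def[symmetric] H_def[symmetric])
      qed
      ultimately show ?thesis by (simp add: anormal_eq)
    qed
    have cder: "((\<lambda>t. c t + R *\<^sub>R anormal (q t) (dq t)) has_vector_derivative
        Q - (R * \<kappa> s * deriv s1 s) *\<^sub>R H) (at s)"
    proof -
      have "((\<lambda>t. c t + R *\<^sub>R anormal (q t) (dq t)) has_vector_derivative
        dc s + R *\<^sub>R ((- (L * \<kappa> s)) *\<^sub>R H)) (at s)"
        using has_vector_derivative_add[OF c_deriv[OF sI] has_vector_derivative_scaleR[OF DERIV_const[of R "at s"] ader]]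
        by simp
      moreover have "dc s + R *\<^sub>R ((- (L * \<kappa> s)) *\<^sub>R H) = Q - (R * \<kappa> s * deriv s1 s) *\<^sub>R H"
        using CQ by (simp add: C_def ds1 algebra_simps)
      ultimately show ?thesis by simp
    qed
    define M where "M = lnorm (dqs s)"
    have qpos: "lor (dqs s) (dqs s) > 0" using sp by (simp add: spacelike_def)
    have Mpos: "M > 0" using qpos by (simp add: M_def lnorm_def)
    have "(1 / M) *\<^sub>R dqs s = A" using mannheim[OF sI] by (simp add: cnormal_def M_def A_def Q_def D_def)
    then have dqsA: "dqs s = M *\<^sub>R A" using Mpos by auto
    have det1: "det3 Q H A = 1"
    proof -
      have "det3 Q H A = - det3 H Q A" using det3_cyc(2)[of H Q A] det3_cyc(1)[of H Q A] det3_cyc(1)[of Q A H]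
        by (metis det3_cyc(2) minus_minus)
      also have "\<dots> = lor A A" using tp[of H Q A] by (simp add: AHQ)
      also have "\<dots> = 1" using lag[of H Q] by (simp add: AHQ HH QQ HQ)
      finally show ?thesis .
    qed
    have "dist_param (vector_derivative (\<lambda>t. c t + R *\<^sub>R anormal (q t) (dq t)) (at s)) (qs s) (dqs s)
       = M * (\<beta> + R * \<kappa> s * deriv s1 s * \<alpha>) / lor (dqs s) (dqs s)"
      unfolding vector_derivative_at[OF cder] dist_param_def qse dqsA[symmetric, THEN sym]
      using det3_lin[of Q "R * \<kappa> s * deriv s1 s" H \<alpha> \<beta> M A] det1
      by (simp add: Q_def H_def D_def algebra_simps)
    then show ?thesis using Mpos qpos by simp
  qed
  show ?thesis
  proof (intro conjI impI)
    assume h: "\<forall>s\<in>I. lor (qs s) (qs s) = 1 \<and> spacelike (dqs s) \<and>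
             qs s = sinh (\<theta> s) *\<^sub>R q s + cosh (\<theta> s) *\<^sub>R cnormal (dq s)"
    show "(\<forall>s\<in>I. dist_param
                 (vector_derivative (\<lambda>t. c t + R *\<^sub>R anormal (q t) (dq t)) (at s))
                 (qs s) (dqs s) = 0)
        \<longleftrightarrow> (\<forall>s\<in>I. cosh (\<theta> s) + R * \<kappa> s * deriv s1 s * sinh (\<theta> s) = 0)"
    proof -
      have "dist_param (vector_derivative (\<lambda>t. c t + R *\<^sub>R anormal (q t) (dq t)) (at s))
                 (qs s) (dqs s) = 0 \<longleftrightarrow> cosh (\<theta> s) + R * \<kappa> s * deriv s1 s * sinh (\<theta> s) = 0" if "s \<in> I" for s
        using pt[of s "sinh (\<theta> s)" "cosh (\<theta> s)"] h that by simp
      then show ?thesis by auto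
    qed
  next
    assume h: "\<forall>s\<in>I. lor (qs s) (qs s) = -1 \<and> spacelike (dqs s) \<and>
             qs s = cosh (\<theta> s) *\<^sub>R q s + sinh (\<theta> s) *\<^sub>R cnormal (dq s)"
    show "(\<forall>s\<in>I. dist_param
                 (vector_derivative (\<lambda>t. c t + R *\<^sub>R anormal (q t) (dq t)) (at s))
                 (qs s) (dqs s) = 0)
        \<longleftrightarrow> (\<forall>s\<in>I. sinh (\<theta> s) + R * \<kappa> s * deriv s1 s * cosh (\<theta> s) = 0)"
    proof -
      have "dist_param (vector_derivative (\<lambda>t. c t + R *\<^sub>R anormal (q t) (dq t)) (at s))
                 (qs s) (dqs s) = 0 \<longleftrightarrow> sinh (\<theta> s) + R * \<kappa> s * deriv s1 s * cosh (\<theta> s) = 0" if "s \<in> I" for s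
        using pt[of s "cosh (\<theta> s)" "sinh (\<theta> s)"] h that by simp
      then show ?thesis by auto
    qed
  qed
qed

end
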